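(* Let $\mathcal{H}$ be a finite-dimensional Hilbert space, let $U_0$ be a unitary operator on $\mathcal{H}$, let $\{p_\omega\}_{\omega\in\Omega}$ be a probability distribution on a finite index set $\Omega$, and for each $\omega\in\Omega$ let $U_\omega$ be a unitary operator on $\mathcal{H}$. Let $\ket{\psi_0}\in\mathcal{H}$ be a unit vector and let $\rho_0$ be a density operator on $\mathcal{H}$. Define $$\rho=\sum_{\omega\in\Omega}p_\omega U_\omega\rho_0U_\omega^\dagger,\qquad \sigma=U_0\ket{\psi_0}\bra{\psi_0}U_0^\dagger .$$ Then $$D(\rho,\sigma)\le D(\rho_0,\ket{\psi_0}\bra{\psi_0})+2\Big\|\sum_{\omega}p_\omega U_\omega-U_0\Big\|+\sum_{\omega}p_\omega\|U_\omega-U_0\|^2,$$ i.e. $D(\rho,\sigma)\le D(\rho_0,\ket{\psi_0}\bra{\psi_0})+2\|E(U_\omega)-U_0\|+E(\|U_\omega-U_0\|^2)$, where $E$ denotes expectation with respect to $\{p_\omega\}$.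
   Context: $D(A,B)={\rm Tr}|A-B|$ denotes the trace distance between operators $A,B$ (with $|X|=\sqrt{X^\dagger X}$), and $\|\cdot\|$ denotes the operator norm. *)

theory Defs
  imports "HOL-Analysis.Analysis"
begin

text \<open>Finite-dimensional Hilbert space = complex^'n with the standard inner product.
Operators are complex matrices complex^'n^'n acting by matrix-vector product.\<close>

definition cadj :: "complex^'n^'m \<Rightarrow> complex^'m^'n" where
  "cadj A = (\<chi> i j. cnj (A $ j $ i))"

definition cinner :: "complex^'n \<Rightarrow> complex^'n \<Rightarrow> complex" where
  "cinner x y = (\<Sum>i\<in>UNIV. cnj (x $ i) * y $ i)"

definition unitary :: "complex^'n^'n \<Rightarrow> bool" where
  "unitary U \<longleftrightarrow> cadj U ** U = mat 1 \<and> U ** cadj U = mat 1"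

definition hermitian :: "complex^'n^'n \<Rightarrow> bool" where
  "hermitian A \<longleftrightarrow> cadj A = A"

definition psd :: "complex^'n^'n \<Rightarrow> bool" where
  "psd A \<longleftrightarrow> hermitian A \<and> (\<forall>x. 0 \<le> Re (cinner x (A *v x)))"

definition density_op :: "complex^'n^'n \<Rightarrow> bool" where
  "density_op \<rho> \<longleftrightarrow> psd \<rho> \<and> trace \<rho> = 1"

text \<open>|X| = sqrt(X^dagger X): the unique positive semidefinite square root.\<close>
definition mat_abs :: "complex^'n^'n \<Rightarrow> complex^'n^'n" where
  "mat_abs X = (THE B. psd B \<and> B ** B = cadj X ** X)"

definition trace_dist :: "complex^'n^'n \<Rightarrow> complex^'n^'n \<Rightarrow> real" where
  "trace_dist A B = Re (trace (mat_abs (A - B)))"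

definition op_norm :: "complex^'n^'n \<Rightarrow> real" where
  "op_norm A = onorm (\<lambda>x. A *v x)"

definition ket_bra :: "complex^'n \<Rightarrow> complex^'n \<Rightarrow> complex^'n^'n" where
  "ket_bra x y = (\<chi> i j. x $ i * cnj (y $ j))"

end

theory Submission
  imports Defs
begin


lemma cinner_zero_right[simp]: "cinner x 0 = 0" by (simp add: cinner_def)
lemma cinner_zero_left[simp]: "cinner 0 x = 0" by (simp add: cinner_def)
lemma scaleR_eq_s: "c *\<^sub>R (y::complex^'n) = complex_of_real c *s y"
proof -
  have "\<And>i. (c *\<^sub>R y)$i = of_real c * y$i" 
    using vector_scaleR_component[of c y] scaleR_conv_of_real[of c "y$i" for i] by metis
  then show ?thesis by (simp add: vec_eq_iff vector_scalar_mult_def)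
qed
lemma cinner_add_right: "cinner x (y + z) = cinner x y + cinner x z"
  by (simp add: cinner_def distrib_left sum.distrib)
lemma cinner_add_left: "cinner (x + y) z = cinner x z + cinner y z"
  by (simp add: cinner_def distrib_right sum.distrib)
lemma cinner_diff_right: "cinner x (y - z) = cinner x y - cinner x z"
  by (simp add: cinner_def right_diff_distrib sum_subtractf)
lemma cinner_diff_left: "cinner (x - y) z = cinner x z - cinner y z"
  by (simp add: cinner_def left_diff_distrib sum_subtractf)
lemma cinner_scale_right: "cinner x (c *s y) = c * cinner x y"
  by (simp add: cinner_def sum_distrib_left ac_simps)
lemma cinner_scale_left: "cinner (c *s x) y = cnj c * cinner x y"
  by (simp add: cinner_def sum_distrib_left ac_simps)
lemma cinner_scaleR_right: "cinner x (c *\<^sub>R y) = of_real c * cinner x y"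
  unfolding scaleR_eq_s by (rule cinner_scale_right)
lemma cinner_scaleR_left: "cinner (c *\<^sub>R x) y = of_real c * cinner x y"
  unfolding scaleR_eq_s cinner_scale_left by simp
lemma cinner_sum_right: "cinner x (\<Sum>i\<in>I. f i) = (\<Sum>i\<in>I. cinner x (f i))"
  by (induct I rule: infinite_finite_induct) (auto simp: cinner_add_right)
lemma cinner_sum_left: "cinner (\<Sum>i\<in>I. f i) y = (\<Sum>i\<in>I. cinner (f i) y)"
  by (induct I rule: infinite_finite_induct) (auto simp: cinner_add_left)
lemma cinner_commute: "cinner y x = cnj (cinner x y)"
  by (simp add: cinner_def ac_simps)
lemma Re_cinner: "Re (cinner x y) = inner x y"
  by (simp add: cinner_def inner_vec_def inner_complex_def)
lemma cinner_self: "cinner x x = of_real ((norm x)\<^sup>2)"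
proof -
  have "cinner x x = (\<Sum>i\<in>UNIV. of_real ((cmod (x $ i))\<^sup>2))"
    unfolding cinner_def by (rule sum.cong, simp, subst complex_norm_square, rule mult.commute)
  also have "\<dots> = of_real ((norm x)\<^sup>2)"
    by (simp add: norm_vec_def L2_set_def sum_nonneg)
  finally show ?thesis .
qed
lemma cinner_adj: "cinner x (A *v y) = cinner (cadj A *v x) y"
proof -
  have "cinner x (A *v y) = (\<Sum>i\<in>UNIV. \<Sum>j\<in>UNIV. cnj (x$i) * A$i$j * y$j)"
    unfolding cinner_def matrix_vector_mult_def by (simp add: sum_distrib_left mult.assoc)
  also have "\<dots> = (\<Sum>j\<in>UNIV. \<Sum>i\<in>UNIV. cnj (x$i) * A$i$j * y$j)"
    by (rule sum.swap)
  also have "\<dots> = cinner (cadj A *v x) y"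
    unfolding cinner_def matrix_vector_mult_def cadj_def
    by (simp add: sum_distrib_right sum_distrib_left mult.commute mult.left_commute)
  finally show ?thesis .
qed
lemma ket_bra_mult: "ket_bra u v *v x = cinner v x *s u"
  by (simp add: ket_bra_def matrix_vector_mult_def cinner_def vector_scalar_mult_def vec_eq_iff
      sum_distrib_left ac_simps)
lemma trace_ket_bra: "trace (C ** ket_bra u v) = cinner v (C *v u)"
  by (simp add: trace_def ket_bra_def matrix_matrix_mult_def cinner_def matrix_vector_mult_def
      sum_distrib_left ac_simps)
lemma mvec_scaleR: "A *v (c *\<^sub>R x) = c *\<^sub>R (A *v (x::complex^'n))"
  by (simp add: linear_scale)
lemma mvec_sum: "A *v (\<Sum>i\<in>I. f i) = (\<Sum>i\<in>I. A *v (f i::complex^'n))"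
  by (induct I rule: infinite_finite_induct) (auto simp: matrix_vector_right_distrib)




definition orthonormal :: "(complex^'n) set \<Rightarrow> bool" where
  "orthonormal B \<longleftrightarrow> (\<forall>b\<in>B. cinner b b = 1) \<and> (\<forall>b\<in>B. \<forall>c\<in>B. b \<noteq> c \<longrightarrow> cinner b c = 0)"

definition complete_on :: "(complex^'n) set \<Rightarrow> bool" where
  "complete_on B \<longleftrightarrow> (\<forall>x. x = (\<Sum>b\<in>B. cinner b x *s b))"

definition eigset :: "complex^'n^'n \<Rightarrow> (complex^'n) set \<Rightarrow> bool" where
  "eigset A B \<longleftrightarrow> finite B \<and> orthonormal B \<and> (\<forall>b\<in>B. \<exists>l::real. A *v b = of_real l *s b)"

lemma herm_cinner: "hermitian A \<Longrightarrow> cinner x (A *v y) = cinner (A *v x) y"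
  by (simp add: hermitian_def cinner_adj)

lemma herm_inner: "hermitian A \<Longrightarrow> inner x (A *v y) = inner (A *v x) y"
  by (metis herm_cinner Re_cinner)

lemma proj_coeff:
  assumes "orthonormal B" "finite B" "c \<in> B"
  shows "cinner c (\<Sum>b\<in>B. f b *s b) = f c"
proof -
  have "cinner c (\<Sum>b\<in>B. f b *s b) = (\<Sum>b\<in>B. f b * cinner c b)"
    by (simp add: cinner_sum_right cinner_scale_right)
  also have "\<dots> = (\<Sum>b\<in>B. if b = c then f c else 0)"
    using assms by (intro sum.cong) (auto simp: orthonormal_def)
  also have "\<dots> = f c" using assms by simp
  finally show ?thesis .
qed

lemma orthonormal_card:
  assumes "orthonormal (B :: (complex^'n) set)"
  shows "finite B \<and> card B \<le> DIM(complex^'n)"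
proof (rule independent_bound, rule pairwise_orthogonal_independent)
  show "pairwise orthogonal B"
    using assms unfolding pairwise_def orthogonal_def orthonormal_def
    by (metis Re_cinner zero_complex.simps(1))
  show "0 \<notin> B" using assms unfolding orthonormal_def by force
qed

lemma norm_expansion:
  assumes "orthonormal B" "finite B"
  shows "(norm (\<Sum>b\<in>B. f b *s b))\<^sup>2 = (\<Sum>b\<in>B. (cmod (f b))\<^sup>2)"
proof -
  let ?s = "\<Sum>b\<in>B. f b *s b"
  have "complex_of_real ((norm ?s)\<^sup>2) = cinner ?s ?s" by (simp add: cinner_self)
  also have "\<dots> = (\<Sum>b\<in>B. cnj (f b) * cinner b ?s)"
    by (simp add: cinner_sum_left cinner_scale_left)
  also have "\<dots> = (\<Sum>b\<in>B. cnj (f b) * f b)"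
    using assms by (intro sum.cong) (auto simp: proj_coeff)
  also have "\<dots> = complex_of_real (\<Sum>b\<in>B. (cmod (f b))\<^sup>2)"
    by (simp only: of_real_sum complex_norm_square, intro sum.cong refl, rule mult.commute)
  finally show ?thesis using of_real_eq_iff by blast
qed

lemma parseval:
  assumes "orthonormal B" "finite B" "complete_on B"
  shows "(norm x)\<^sup>2 = (\<Sum>b\<in>B. (cmod (cinner b x))\<^sup>2)"
  using norm_expansion[OF assms(1,2), of "\<lambda>b. cinner b x"] assms(3)
  unfolding complete_on_def by metis

lemma mat_eq_on_basis:
  assumes "complete_on B" "\<And>b. b \<in> B \<Longrightarrow> M *v b = N *v b"
  shows "M = (N :: complex^'n^'n)"
proof (subst matrix_eq, intro allI)
  fix x :: "complex^'n"
  have "M *v x = M *v (\<Sum>b\<in>B. cinner b x *s b)"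
    using assms(1) unfolding complete_on_def by metis
  also have "\<dots> = (\<Sum>b\<in>B. cinner b x *s (N *v b))"
    by (simp add: mvec_sum vector_scalar_commute assms(2))
  also have "\<dots> = N *v (\<Sum>b\<in>B. cinner b x *s b)"
    by (simp add: mvec_sum vector_scalar_commute)
  also have "\<dots> = N *v x"
    using assms(1) unfolding complete_on_def by metis
  finally show "M *v x = N *v x" .
qed

lemma extend_eigset:
  assumes herm: "hermitian A" and es: "eigset A B" and nc: "\<not> complete_on B"
  shows "\<exists>v. v \<notin> B \<and> eigset A (insert v B)"
proof -
  from es have finB: "finite B" and onB: "orthonormal B"
    and eig: "\<forall>b\<in>B. \<exists>l::real. A *v b = of_real l *s b" by (auto simp: eigset_def)
  from nc obtain x0 where x0: "x0 \<noteq> (\<Sum>b\<in>B. cinner b x0 *s b)"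
    unfolding complete_on_def by blast
  define y0 where "y0 = x0 - (\<Sum>b\<in>B. cinner b x0 *s b)"
  have y0nz: "y0 \<noteq> 0" using x0 by (simp add: y0_def)
  define W where "W = {z. \<forall>b\<in>B. cinner b z = 0}"
  have y0W: "y0 \<in> W"
    unfolding W_def y0_def using finB onB by (auto simp: cinner_diff_right proj_coeff)
  have W_add: "z + w \<in> W" if "z \<in> W" "w \<in> W" for z w
    using that by (simp add: W_def cinner_add_right)
  have W_scale: "r *\<^sub>R z \<in> W" if "z \<in> W" for z r
    using that by (simp add: W_def cinner_scaleR_right)
  have W_diff: "z - w \<in> W" if "z \<in> W" "w \<in> W" for z w
    using that by (simp add: W_def cinner_diff_right)
  have W_inv: "A *v z \<in> W" if "z \<in> W" for z
  proof -
    have "cinner b (A *v z) = 0" if "b \<in> B" for b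
    proof -
      obtain l :: real where l: "A *v b = of_real l *s b" using eig \<open>b \<in> B\<close> by blast
      have "cinner b (A *v z) = cinner (A *v b) z" by (rule herm_cinner[OF herm])
      also have "\<dots> = 0" using \<open>z \<in> W\<close> \<open>b \<in> B\<close> by (simp add: l cinner_scale_left W_def)
      finally show ?thesis .
    qed
    then show ?thesis by (simp add: W_def)
  qed
  have closedW: "closed W"
  proof -
    have "W = (\<Inter>b\<in>B. {z. cinner b z = 0})" by (auto simp: W_def)
    moreover have "closed {z. cinner b z = 0}" for b :: "complex^'n"
    proof (rule closed_Collect_eq)
      show "continuous_on UNIV (\<lambda>z. cinner b z)"
        unfolding cinner_def by (intro continuous_intros)
    qed simp
    ultimately show ?thesis by auto
  qed
  define K where "K = W \<inter> sphere 0 1"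
  have compK: "compact K" unfolding K_def using closedW by (intro closed_Int_compact) auto
  have "(1 / norm y0) *\<^sub>R y0 \<in> K" using y0nz y0W W_scale by (auto simp: K_def)
  then have Kne: "K \<noteq> {}" by blast
  define f where "f z = inner z (A *v z)" for z
  have contf: "continuous_on K f"
    unfolding f_def by (intro continuous_intros linear_continuous_on bounded_linear_intros) auto
  obtain x where xK: "x \<in> K" and xmax: "\<And>z. z \<in> K \<Longrightarrow> f z \<le> f x"
    using continuous_attains_sup[OF compK Kne contf] by blast
  have xW: "x \<in> W" and nx: "norm x = 1" using xK by (auto simp: K_def)
  define lam where "lam = f x"
  have fscale: "f (r *\<^sub>R z) = r\<^sup>2 * f z" for r z
    by (simp add: f_def mvec_scaleR power2_eq_square)
  have fle: "f z \<le> lam * (norm z)\<^sup>2" if "z \<in> W" for z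
  proof (cases "z = 0")
    case True then show ?thesis by (simp add: f_def)
  next
    case False
    have "(1 / norm z) *\<^sub>R z \<in> K" using False that W_scale by (auto simp: K_def)
    then have "f ((1 / norm z) *\<^sub>R z) \<le> lam" using xmax lam_def by blast
    then have "(1 / norm z)\<^sup>2 * f z \<le> lam" by (simp add: fscale)
    then show ?thesis using False by (simp add: field_simps)
  qed
  define y where "y = A *v x - lam *\<^sub>R x"
  have yW: "y \<in> W" unfolding y_def using xW W_inv W_scale W_diff by blast
  have xx: "inner x x = 1" using nx by (simp add: dot_square_norm)
  have xy: "inner x y = 0" unfolding y_def using xx by (simp add: inner_diff_right lam_def f_def)
  have yx: "inner y x = 0" using xy by (simp add: inner_commute)
  have yAx: "inner y (A *v x) = (norm y)\<^sup>2"
  proof -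
    have "A *v x = y + lam *\<^sub>R x" by (simp add: y_def)
    then show ?thesis by (simp add: inner_add_right yx dot_square_norm)
  qed
  have y0: "y = 0"
  proof (rule ccontr)
    assume ynz: "y \<noteq> 0"
    define ny where "ny = (norm y)\<^sup>2"
    have nypos: "ny > 0" using ynz by (simp add: ny_def)
    define c where "c = f y - lam * ny"
    define t where "t = ny / (\<bar>c\<bar> + 1)"
    have tpos: "t > 0" using nypos by (simp add: t_def add_pos_nonneg)
    have tc: "t * \<bar>c\<bar> \<le> ny"
    proof -
      have "t * \<bar>c\<bar> \<le> t * (\<bar>c\<bar> + 1)" using tpos by simp
      also have "\<dots> = ny" by (simp add: t_def)
      finally show ?thesis .
    qed
    define z where "z = x + t *\<^sub>R y"
    have zW: "z \<in> W" unfolding z_def using xW yW W_add W_scale by blast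
    have nz: "(norm z)\<^sup>2 = 1 + t\<^sup>2 * ny"
    proof -
      have "(norm z)\<^sup>2 = inner z z" by (simp add: dot_square_norm)
      also have "\<dots> = inner x x + 2 * t * inner x y + t\<^sup>2 * inner y y"
        by (simp add: z_def inner_add_left inner_add_right inner_commute[of y x] power2_eq_square algebra_simps)
      also have "\<dots> = 1 + t\<^sup>2 * ny" by (simp add: xx xy ny_def dot_square_norm nx)
      finally show ?thesis .
    qed
    have fz: "f z = lam + 2 * t * ny + t\<^sup>2 * f y"
    proof -
      have sym: "inner x (A *v y) = inner y (A *v x)"
        using herm_inner[OF herm, of x y] by (simp add: inner_commute)
      have "f z = f x + t * inner x (A *v y) + t * inner y (A *v x) + t\<^sup>2 * f y"
        by (simp add: f_def z_def matrix_vector_right_distrib mvec_scaleR inner_add_left inner_add_right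
            power2_eq_square algebra_simps)
      then show ?thesis by (simp add: sym yAx ny_def lam_def)
    qed
    have "lam + 2 * t * ny + t\<^sup>2 * f y \<le> lam * (1 + t\<^sup>2 * ny)"
      using fle[OF zW] fz nz by simp
    then have "2 * t * ny + t\<^sup>2 * c \<le> 0" by (simp add: c_def algebra_simps)
    then have "t * (2 * ny + t * c) \<le> 0" by (simp add: power2_eq_square algebra_simps)
    then have "2 * ny + t * c \<le> 0" using tpos by (simp add: mult_le_0_iff)
    moreover have "- ny \<le> t * c"
    proof -
      have "t * (- \<bar>c\<bar>) \<le> t * c" using tpos by (intro mult_left_mono) auto
      then have "- (t * \<bar>c\<bar>) \<le> t * c" by simp
      then show ?thesis using tc by linarith
    qed
    ultimately show False using nypos by linarith
  qed
  have Ax: "A *v x = of_real lam *s x"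
    using y0 by (simp add: y_def scaleR_eq_s)
  have cxx: "cinner x x = 1" by (simp add: cinner_self nx)
  have bx: "cinner b x = 0" if "b \<in> B" for b using xW that by (simp add: W_def)
  have xb: "cinner x b = 0" if "b \<in> B" for b using bx[OF that] by (subst cinner_commute) simp
  have xnB: "x \<notin> B" using bx cxx by force
  have "eigset A (insert x B)"
    using finB onB eig Ax cxx bx xb unfolding eigset_def orthonormal_def by auto
  with xnB show ?thesis by blast
qed

theorem spectral:
  assumes "hermitian (A :: complex^'n^'n)"
  shows "\<exists>B. eigset A B \<and> complete_on B"
proof -
  define P where "P k \<longleftrightarrow> (\<exists>B. eigset A B \<and> card B = k)" for k
  have P0: "P 0" unfolding P_def by (rule exI[of _ "{}"]) (simp add: eigset_def orthonormal_def)
  have bnd: "\<forall>k. P k \<longrightarrow> id k < DIM(complex^'n) + 1"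
    using orthonormal_card unfolding P_def eigset_def by fastforce
  obtain k where Pk: "P k" and kmax: "\<forall>j. P j \<longrightarrow> id j \<le> id k"
    using ex_has_greatest_nat[OF P0 bnd] by blast
  from Pk obtain B where es: "eigset A B" and cB: "card B = k" unfolding P_def by blast
  have "complete_on B"
  proof (rule ccontr)
    assume "\<not> complete_on B"
    then obtain v where "v \<notin> B" "eigset A (insert v B)" using extend_eigset[OF assms es] by blast
    moreover have "finite B" using es by (simp add: eigset_def)
    ultimately have "P (Suc k)" unfolding P_def using cB by (intro exI[of _ "insert v B"]) simp
    then show False using kmax by fastforce
  qed
  with es show ?thesis by blast
qed




definition diag :: "(complex^'n) set \<Rightarrow> (complex^'n \<Rightarrow> real) \<Rightarrow> complex^'n^'n" where
  "diag B r = (\<Sum>b\<in>B. r b *\<^sub>R ket_bra b b)"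

lemma mvec_msum: "(\<Sum>i\<in>I. M i) *v x = (\<Sum>i\<in>I. M i *v (x::complex^'n))"
  by (induct I rule: infinite_finite_induct) (auto simp: matrix_vector_mult_add_rdistrib)

lemma mvec_mscaleR: "(r *\<^sub>R M) *v x = r *\<^sub>R (M *v (x::complex^'n))"
  by (simp add: vec_eq_iff matrix_vector_mult_def scaleR_sum_right)

lemma cadj_add: "cadj (A + B) = cadj A + cadj B"
  by (simp add: cadj_def vec_eq_iff)
lemma cadj_diff: "cadj (A - B) = cadj A - cadj B"
  by (simp add: cadj_def vec_eq_iff)
lemma cadj_zero: "cadj 0 = 0"
  by (simp add: cadj_def vec_eq_iff)
lemma cadj_scaleR: "cadj (r *\<^sub>R A) = r *\<^sub>R cadj A"
  by (simp add: cadj_def vec_eq_iff)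
lemma cadj_sum: "cadj (\<Sum>i\<in>I. M i) = (\<Sum>i\<in>I. cadj (M i))"
  by (induct I rule: infinite_finite_induct) (auto simp: cadj_add cadj_zero)
lemma cadj_ket_bra: "cadj (ket_bra u v) = ket_bra v u"
  by (simp add: cadj_def ket_bra_def vec_eq_iff)
lemma cadj_cadj: "cadj (cadj A) = A"
  by (simp add: cadj_def vec_eq_iff)
lemma cadj_mult: "cadj (A ** B) = cadj B ** cadj A"
  by (simp add: cadj_def vec_eq_iff matrix_matrix_mult_def mult.commute)

lemma trace_sum: "trace (\<Sum>i\<in>I. M i) = (\<Sum>i\<in>I. trace (M i :: complex^'n^'n))"
proof (induct I rule: infinite_finite_induct)
  case (infinite A) then show ?case by (simp add: trace_def)
next
  case empty then show ?case by (simp add: trace_def)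
next
  case (insert x F) then show ?case by (simp add: trace_add)
qed
lemma trace_scaleR: "trace (r *\<^sub>R (M :: complex^'n^'n)) = of_real r * trace M"
proof -
  have "trace (r *\<^sub>R M) = r *\<^sub>R trace M" by (simp add: trace_def scaleR_sum_right)
  then show ?thesis by (simp add: scaleR_conv_of_real)
qed
lemma mmul_sum_right: "C ** (\<Sum>i\<in>I. M i) = (\<Sum>i\<in>I. C ** (M i :: complex^'n^'n))"
  by (induct I rule: infinite_finite_induct) (auto simp: matrix_add_ldistrib)
lemma mmul_scaleR_right: "C ** (r *\<^sub>R M) = r *\<^sub>R (C ** (M :: complex^'n^'n))"
  by (simp add: vec_eq_iff matrix_matrix_mult_def scaleR_sum_right)

lemma diag_apply: "diag B r *v x = (\<Sum>b\<in>B. (of_real (r b) * cinner b x) *s b)"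
  by (simp add: diag_def mvec_msum mvec_mscaleR ket_bra_mult scaleR_eq_s vector_smult_assoc)

lemma diag_apply_basis:
  assumes "orthonormal B" "finite B" "c \<in> B"
  shows "diag B r *v c = of_real (r c) *s c"
proof -
  have "diag B r *v c = (\<Sum>b\<in>B. (if b = c then of_real (r c) *s c else 0))"
    unfolding diag_apply using assms
    by (intro sum.cong) (auto simp: orthonormal_def)
  also have "\<dots> = of_real (r c) *s c" using assms by simp
  finally show ?thesis .
qed

lemma hermitian_diag: "hermitian (diag B r)"
  by (simp add: hermitian_def diag_def cadj_sum cadj_scaleR cadj_ket_bra)

lemma trace_diag: "trace (C ** diag B r) = (\<Sum>b\<in>B. of_real (r b) * cinner b (C *v b))"
  by (simp add: diag_def mmul_sum_right mmul_scaleR_right trace_sum trace_scaleR trace_ket_bra)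

lemma norm_one: assumes "cinner b b = 1" shows "norm b = 1"
proof -
  have "complex_of_real ((norm b)\<^sup>2) = 1" using assms by (simp only: cinner_self)
  then have "(norm b)\<^sup>2 = 1" using of_real_eq_1_iff by blast
  then show ?thesis by (smt (verit) norm_ge_zero power2_eq_1_iff)
qed

lemma psd_diag:
  assumes "orthonormal B" "finite B" "\<And>b. b \<in> B \<Longrightarrow> r b \<ge> 0"
  shows "psd (diag B r)"
  unfolding psd_def
proof (intro conjI allI hermitian_diag)
  fix x
  have "cinner x (diag B r *v x) = (\<Sum>b\<in>B. of_real (r b) * cinner b x * cinner x b)"
    by (simp add: diag_apply cinner_sum_right cinner_scale_right mult.assoc)
  also have "\<dots> = of_real (\<Sum>b\<in>B. r b * (cmod (cinner b x))\<^sup>2)"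
    unfolding of_real_sum
    by (intro sum.cong refl) (simp add: cinner_commute[of x] complex_norm_square mult.assoc del: of_real_power)
  finally show "0 \<le> Re (cinner x (diag B r *v x))"
    using assms(3) by (simp add: sum_nonneg)
qed

lemma psd_inner: "psd T \<Longrightarrow> 0 \<le> inner x (T *v x)"
  by (metis psd_def Re_cinner)

lemma psd_zero:
  assumes "psd T" "inner v (T *v v) = 0"
  shows "T *v v = 0"
proof (rule ccontr)
  assume wnz: "T *v v \<noteq> 0"
  define w where "w = T *v v"
  have herm: "hermitian T" using assms(1) by (simp add: psd_def)
  define nw where "nw = inner w w"
  have nwpos: "nw > 0" using wnz by (simp add: nw_def w_def)
  define q where "q = inner w (T *v w)"
  define t where "t = nw / (\<bar>q\<bar> + 1)"
  have tpos: "t > 0" using nwpos by (simp add: t_def add_pos_nonneg)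
  have tq: "t * \<bar>q\<bar> \<le> nw"
  proof -
    have "t * \<bar>q\<bar> \<le> t * (\<bar>q\<bar> + 1)" using tpos by simp
    also have "\<dots> = nw" by (simp add: t_def)
    finally show ?thesis .
  qed
  have vTw: "inner v (T *v w) = nw"
    using herm_inner[OF herm, of v w] by (simp add: nw_def w_def inner_commute)
  have "inner (v - t *\<^sub>R w) (T *v (v - t *\<^sub>R w)) =
        inner v (T *v v) - t * inner v (T *v w) - t * inner w (T *v v) + t\<^sup>2 * inner w (T *v w)"
    by (simp add: matrix_vector_mult_diff_distrib mvec_scaleR inner_diff_left inner_diff_right
        power2_eq_square algebra_simps)
  also have "\<dots> = - 2 * t * nw + t * (t * q)"
    using assms(2) vTw by (simp add: w_def nw_def q_def power2_eq_square)
  also have "\<dots> < 0"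
  proof -
    have "t * q \<le> nw" using tq by (metis abs_ge_self order_trans mult_left_mono tpos less_imp_le)
    then have "t * (t * q) \<le> t * nw" using tpos by (simp add: mult_left_mono)
    moreover have "t * nw > 0" using tpos nwpos by simp
    ultimately show ?thesis by linarith
  qed
  finally show False using psd_inner[OF assms(1)] by (metis not_le)
qed

lemma sqrt_unique:
  assumes T: "psd T" and S: "psd S" and TS: "T ** T = S ** (S :: complex^'n^'n)"
  shows "T = S"
proof -
  have hT: "hermitian T" and hS: "hermitian S" using T S by (auto simp: psd_def)
  define D where "D = T - S"
  have hD: "hermitian D" using hT hS by (simp add: hermitian_def D_def cadj_diff)
  obtain B where es: "eigset D B" and cB: "complete_on B" using spectral[OF hD] by blast
  have "D = 0"
  proof (rule mat_eq_on_basis[OF cB])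
    fix c assume cB': "c \<in> B"
    obtain mu :: real where mu: "D *v c = of_real mu *s c" using es cB' by (auto simp: eigset_def)
    have muR: "D *v c = mu *\<^sub>R c" using mu by (simp add: scaleR_eq_s)
    have Tc: "T *v c = S *v c + mu *\<^sub>R c" using muR by (simp add: D_def matrix_vector_mult_diff_rdistrib algebra_simps)
    have "inner c (T *v (T *v c)) = inner c (S *v (S *v c))"
      using TS by (simp add: matrix_vector_mul_assoc)
    moreover have "inner c (T *v (T *v c)) = inner (S *v c) (S *v c) + mu * inner c (S *v c) + mu * inner c (T *v c)"
    proof -
      have "inner c (T *v (T *v c)) = inner c (T *v (S *v c)) + mu * inner c (T *v c)"
        by (simp add: Tc matrix_vector_right_distrib mvec_scaleR inner_add_right)
      also have "inner c (T *v (S *v c)) = inner (T *v c) (S *v c)" by (rule herm_inner[OF hT])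
      also have "\<dots> = inner (S *v c) (S *v c) + mu * inner c (S *v c)"
        by (simp add: Tc inner_add_left inner_commute[of c])
      finally show ?thesis .
    qed
    moreover have "inner c (S *v (S *v c)) = inner (S *v c) (S *v c)" by (rule herm_inner[OF hS])
    ultimately have eq: "mu * (inner c (S *v c) + inner c (T *v c)) = 0" by (simp add: algebra_simps)
    show "D *v c = 0 *v c"
    proof (cases "mu = 0")
      case True then show ?thesis using muR by simp
    next
      case False
      then have "inner c (S *v c) + inner c (T *v c) = 0" using eq by simp
      moreover have "0 \<le> inner c (S *v c)" "0 \<le> inner c (T *v c)" using psd_inner S T by auto
      ultimately have "inner c (S *v c) = 0" "inner c (T *v c) = 0" by linarith+
      then have "S *v c = 0" "T *v c = 0" using psd_zero S T by auto
      then show ?thesis by (simp add: D_def matrix_vector_mult_diff_rdistrib)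
    qed
  qed
  then show ?thesis by (simp add: D_def)
qed




lemma herm_decomp:
  assumes "hermitian (X :: complex^'n^'n)"
  shows "\<exists>B lam. orthonormal B \<and> finite B \<and> complete_on B \<and>
           (\<forall>b\<in>B. X *v b = of_real (lam b) *s b) \<and> X = diag B lam"
proof -
  obtain B where es: "eigset X B" and cB: "complete_on B" using spectral[OF assms] by blast
  have on: "orthonormal B" and fin: "finite B" using es by (auto simp: eigset_def)
  have "\<forall>b\<in>B. \<exists>l::real. X *v b = of_real l *s b" using es by (simp add: eigset_def)
  then obtain lam where lam: "\<forall>b\<in>B. X *v b = of_real (lam b) *s b" by metis
  have "X = diag B lam"
    by (rule mat_eq_on_basis[OF cB]) (simp add: lam diag_apply_basis[OF on fin])
  with on fin cB lam show ?thesis by blast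
qed

lemma mat_abs_herm:
  assumes herm: "hermitian X" and on: "orthonormal B" and fin: "finite B" and cB: "complete_on B"
    and lam: "\<forall>b\<in>B. X *v b = of_real (lam b) *s b"
  shows "mat_abs X = diag B (\<lambda>b. \<bar>lam b\<bar>)"
proof -
  let ?S = "diag B (\<lambda>b. \<bar>lam b\<bar>)"
  have psdS: "psd ?S" by (rule psd_diag[OF on fin]) simp
  have SS: "?S ** ?S = cadj X ** X"
  proof (rule mat_eq_on_basis[OF cB])
    fix c assume c: "c \<in> B"
    have Sc: "?S *v c = of_real \<bar>lam c\<bar> *s c" by (rule diag_apply_basis[OF on fin c])
    have e: "complex_of_real \<bar>lam c\<bar> * complex_of_real \<bar>lam c\<bar> = complex_of_real (lam c) * complex_of_real (lam c)"
      by (simp flip: of_real_mult)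
    have "(?S ** ?S) *v c = (complex_of_real \<bar>lam c\<bar> * complex_of_real \<bar>lam c\<bar>) *s c"
      by (simp add: matrix_vector_mul_assoc[symmetric] Sc vector_scalar_commute)
    also have "\<dots> = (cadj X ** X) *v c"
      using herm c lam by (simp add: e hermitian_def matrix_vector_mul_assoc[symmetric] vector_scalar_commute)
    finally show "(?S ** ?S) *v c = (cadj X ** X) *v c" .
  qed
  show ?thesis unfolding mat_abs_def
  proof (rule the_equality)
    show "psd ?S \<and> ?S ** ?S = cadj X ** X" using psdS SS by blast
  next
    fix T assume "psd T \<and> T ** T = cadj X ** X"
    then show "T = ?S" using sqrt_unique[of T ?S] psdS SS by simp
  qed
qed

lemma cinner_mat1: "mat 1 *v x = x"
  by simp

lemma tr_mat_abs:
  assumes "hermitian X" and on: "orthonormal B" and fin: "finite B" and cB: "complete_on B"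
    and lam: "\<forall>b\<in>B. X *v b = of_real (lam b) *s b"
  shows "Re (trace (mat_abs X)) = (\<Sum>b\<in>B. \<bar>lam b\<bar>)"
proof -
  have "trace (mat_abs X) = trace (mat 1 ** diag B (\<lambda>b. \<bar>lam b\<bar>))"
    by (simp add: mat_abs_herm[OF assms])
  also have "\<dots> = (\<Sum>b\<in>B. complex_of_real \<bar>lam b\<bar>)"
    unfolding trace_diag using on by (intro sum.cong refl) (simp add: orthonormal_def)
  finally show ?thesis by simp
qed

definition contr :: "complex^'n^'n \<Rightarrow> bool" where
  "contr C \<longleftrightarrow> (\<forall>x. norm (C *v x) \<le> norm x)"

lemma L1:
  assumes "hermitian X" and C: "contr C"
  shows "Re (trace (C ** X)) \<le> Re (trace (mat_abs X))"
proof -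
  obtain B lam where on: "orthonormal B" and fin: "finite B" and cB: "complete_on B"
    and lam: "\<forall>b\<in>B. X *v b = of_real (lam b) *s b" and Xd: "X = diag B lam"
    using herm_decomp[OF assms(1)] by blast
  have "Re (trace (C ** X)) = (\<Sum>b\<in>B. lam b * inner b (C *v b))"
    by (simp add: Xd trace_diag Re_cinner)
  also have "\<dots> \<le> (\<Sum>b\<in>B. \<bar>lam b\<bar>)"
  proof (rule sum_mono)
    fix b assume b: "b \<in> B"
    have nb: "norm b = 1" using on b by (simp add: orthonormal_def norm_one)
    have "\<bar>inner b (C *v b)\<bar> \<le> norm b * norm (C *v b)" by (rule Cauchy_Schwarz_ineq2)
    also have "\<dots> \<le> 1" using C nb unfolding contr_def by (metis mult_1)
    finally have i1: "\<bar>inner b (C *v b)\<bar> \<le> 1" .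
    have "lam b * inner b (C *v b) \<le> \<bar>lam b\<bar> * \<bar>inner b (C *v b)\<bar>"
      by (metis abs_ge_self abs_mult)
    also have "\<dots> \<le> \<bar>lam b\<bar>" using i1 by (simp add: mult_left_le)
    finally show "lam b * inner b (C *v b) \<le> \<bar>lam b\<bar>" .
  qed
  also have "\<dots> = Re (trace (mat_abs X))" by (rule tr_mat_abs[OF assms(1) on fin cB lam, symmetric])
  finally show ?thesis .
qed

lemma L2:
  assumes "hermitian X"
  shows "\<exists>C. contr C \<and> Re (trace (C ** X)) = Re (trace (mat_abs X))"
proof -
  obtain B lam where on: "orthonormal B" and fin: "finite B" and cB: "complete_on B"
    and lam: "\<forall>b\<in>B. X *v b = of_real (lam b) *s b" and Xd: "X = diag B lam"
    using herm_decomp[OF assms(1)] by blast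
  define C where "C = diag B (\<lambda>b. sgn (lam b))"
  have "contr C" unfolding contr_def
  proof
    fix x
    have "(norm (C *v x))\<^sup>2 = (\<Sum>b\<in>B. (cmod (complex_of_real (sgn (lam b)) * cinner b x))\<^sup>2)"
      unfolding C_def diag_apply by (rule norm_expansion[OF on fin])
    also have "\<dots> \<le> (\<Sum>b\<in>B. (cmod (cinner b x))\<^sup>2)"
    proof (rule sum_mono)
      fix b
      have "cmod (complex_of_real (sgn (lam b)) * cinner b x) \<le> cmod (cinner b x)"
        by (simp add: norm_mult abs_sgn_eq mult_left_le)
      then show "(cmod (complex_of_real (sgn (lam b)) * cinner b x))\<^sup>2 \<le> (cmod (cinner b x))\<^sup>2"
        by (simp add: power_mono)
    qed
    also have "\<dots> = (norm x)\<^sup>2" by (rule parseval[OF on fin cB, symmetric])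
    finally have "(norm (C *v x))\<^sup>2 \<le> (norm x)\<^sup>2" .
    then show "norm (C *v x) \<le> norm x" by (rule power2_le_imp_le) simp
  qed
  moreover have "Re (trace (C ** X)) = Re (trace (mat_abs X))"
  proof -
    have "Re (trace (C ** X)) = (\<Sum>b\<in>B. lam b * sgn (lam b))"
      unfolding Xd trace_diag C_def Re_sum using on fin
      by (intro sum.cong refl) (simp add: diag_apply_basis cinner_scale_right orthonormal_def)
    also have "\<dots> = (\<Sum>b\<in>B. \<bar>lam b\<bar>)" by (intro sum.cong refl) (simp add: sgn_if)
    also have "\<dots> = Re (trace (mat_abs X))" by (rule tr_mat_abs[OF assms(1) on fin cB lam, symmetric])
    finally show ?thesis .
  qed
  ultimately show ?thesis by blast
qed




lemma mmul_diff_right: "C ** (A - B) = C ** A - C ** (B :: complex^'n^'n)"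
  by (simp add: vec_eq_iff matrix_matrix_mult_def right_diff_distrib sum_subtractf)

lemma op_bound: "norm (M *v x) \<le> op_norm M * norm (x :: complex^'n)"
  unfolding op_norm_def by (rule onorm) (rule matrix_vector_mul_bounded_linear)

lemma op_norm_nonneg: "0 \<le> op_norm (M :: complex^'n^'n)"
  unfolding op_norm_def by (rule onorm_pos_le) (rule matrix_vector_mul_bounded_linear)

lemma unitary_norm:
  assumes "unitary U" shows "norm (U *v x) = norm x"
proof -
  have "cinner (U *v x) (U *v x) = cinner ((cadj U ** U) *v x) x"
    by (simp add: cinner_adj matrix_vector_mul_assoc)
  also have "\<dots> = cinner x x" using assms by (simp add: unitary_def)
  finally have "complex_of_real ((norm (U *v x))\<^sup>2) = complex_of_real ((norm x)\<^sup>2)"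
    by (simp only: cinner_self)
  then have "(norm (U *v x))\<^sup>2 = (norm x)\<^sup>2" using of_real_eq_iff by blast
  then show ?thesis by (simp add: power2_eq_iff_nonneg)
qed

lemma unitary_cadj: "unitary U \<Longrightarrow> unitary (cadj U)"
  by (simp add: unitary_def cadj_cadj)

lemma contr_conj:
  assumes "contr C" "unitary U"
  shows "contr (cadj U ** C ** U)"
  unfolding contr_def
proof
  fix x
  have "norm ((cadj U ** C ** U) *v x) = norm (cadj U *v (C *v (U *v x)))"
    by (simp add: matrix_vector_mul_assoc matrix_mul_assoc)
  also have "\<dots> = norm (C *v (U *v x))" by (rule unitary_norm[OF unitary_cadj[OF assms(2)]])
  also have "\<dots> \<le> norm (U *v x)" using assms(1) by (simp add: contr_def)
  also have "\<dots> = norm x" by (rule unitary_norm[OF assms(2)])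
  finally show "norm ((cadj U ** C ** U) *v x) \<le> norm x" .
qed

lemma trace_conj: "trace (C ** (U ** M ** cadj U)) = trace ((cadj U ** C ** U) ** (M :: complex^'n^'n))"
proof -
  have "trace (C ** (U ** M ** cadj U)) = trace ((C ** U ** M) ** cadj U)"
    by (simp add: matrix_mul_assoc)
  also have "\<dots> = trace (cadj U ** (C ** U ** M))" by (rule trace_mul_sym)
  also have "\<dots> = trace ((cadj U ** C ** U) ** M)" by (simp add: matrix_mul_assoc)
  finally show ?thesis .
qed

lemma trace_CP: "trace ((cadj U ** C ** U) ** ket_bra v v) = cinner (U *v v) (C *v (U *v v))"
proof -
  have "trace ((cadj U ** C ** U) ** ket_bra v v) = cinner v (cadj U *v (C *v (U *v v)))"
    by (simp add: trace_ket_bra matrix_vector_mul_assoc matrix_mul_assoc)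
  also have "\<dots> = cinner (U *v v) (C *v (U *v v))" by (simp add: cinner_adj cadj_cadj)
  finally show ?thesis .
qed

lemma herm_conj: "hermitian M \<Longrightarrow> hermitian (U ** M ** cadj U)"
  by (simp add: hermitian_def cadj_mult cadj_cadj matrix_mul_assoc)

lemma herm_ket_bra: "hermitian (ket_bra v v)"
  by (simp add: hermitian_def cadj_ket_bra)

lemma inner_C_bound:
  assumes "contr C" shows "inner u (C *v v) \<le> norm u * norm v"
proof -
  have "inner u (C *v v) \<le> norm u * norm (C *v v)" by (metis Cauchy_Schwarz_ineq2 abs_le_D1)
  also have "\<dots> \<le> norm u * norm v" using assms by (simp add: contr_def mult_left_mono)
  finally show ?thesis .
qed




theorem lemma1:
  fixes U0 :: "complex^'n^'n"
    and U :: "'w \<Rightarrow> complex^'n^'n"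
    and p :: "'w \<Rightarrow> real"
    and \<Omega> :: "'w set"
    and \<psi>0 :: "complex^'n"
    and \<rho>0 :: "complex^'n^'n"
  assumes "finite \<Omega>"
    and "\<And>\<omega>. \<omega> \<in> \<Omega> \<Longrightarrow> p \<omega> \<ge> 0"
    and "(\<Sum>\<omega>\<in>\<Omega>. p \<omega>) = 1"
    and "unitary U0"
    and "\<And>\<omega>. \<omega> \<in> \<Omega> \<Longrightarrow> unitary (U \<omega>)"
    and "norm \<psi>0 = 1"
    and "density_op \<rho>0"
  shows "let \<rho> = (\<Sum>\<omega>\<in>\<Omega>. p \<omega> *\<^sub>R (U \<omega> ** \<rho>0 ** cadj (U \<omega>)));
             \<sigma> = U0 ** ket_bra \<psi>0 \<psi>0 ** cadj U0
         in trace_dist \<rho> \<sigma> \<le> trace_dist \<rho>0 (ket_bra \<psi>0 \<psi>0)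
              + 2 * op_norm ((\<Sum>\<omega>\<in>\<Omega>. p \<omega> *\<^sub>R U \<omega>) - U0)
              + (\<Sum>\<omega>\<in>\<Omega>. p \<omega> * (op_norm (U \<omega> - U0))\<^sup>2)"
proof -
  note fin = assms(1) and pnn = assms(2) and psum = assms(3) and uU0 = assms(4)
    and uU = assms(5) and npsi = assms(6)
  define P where "P = ket_bra \<psi>0 \<psi>0"
  define \<rho> where "\<rho> = (\<Sum>\<omega>\<in>\<Omega>. p \<omega> *\<^sub>R (U \<omega> ** \<rho>0 ** cadj (U \<omega>)))"
  define \<sigma> where "\<sigma> = U0 ** P ** cadj U0"
  define a where "a = U0 *v \<psi>0"
  define E where "E = (\<Sum>\<omega>\<in>\<Omega>. p \<omega> *\<^sub>R U \<omega>) - U0"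
  define d where "d \<omega> = U \<omega> *v \<psi>0 - a" for \<omega>
  define T0 where "T0 = trace_dist \<rho>0 P"
  have hr0: "hermitian \<rho>0" using assms(7) by (simp add: density_op_def psd_def)
  have hP: "hermitian P" by (simp add: P_def herm_ket_bra)
  have hr0P: "hermitian (\<rho>0 - P)" using hr0 hP by (simp add: hermitian_def cadj_diff)
  have hrho: "hermitian \<rho>"
    using hr0 by (simp add: \<rho>_def hermitian_def cadj_sum cadj_scaleR herm_conj[unfolded hermitian_def])
  have hsig: "hermitian \<sigma>" using hP by (simp add: \<sigma>_def herm_conj)
  have hX: "hermitian (\<rho> - \<sigma>)" using hrho hsig by (simp add: hermitian_def cadj_diff)
  obtain C where C: "contr C" and CX: "Re (trace (C ** (\<rho> - \<sigma>))) = Re (trace (mat_abs (\<rho> - \<sigma>)))"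
    using L2[OF hX] by blast
  define g where "g \<omega> = inner (U \<omega> *v \<psi>0) (C *v (U \<omega> *v \<psi>0))" for \<omega>
  have na: "norm a = 1" using unitary_norm[OF uU0] npsi by (simp add: a_def)
  have tr_om: "Re (trace (C ** (U \<omega> ** \<rho>0 ** cadj (U \<omega>)))) \<le> T0 + g \<omega>" if w: "\<omega> \<in> \<Omega>" for \<omega>
  proof -
    define C' where "C' = cadj (U \<omega>) ** C ** U \<omega>"
    have cC': "contr C'" unfolding C'_def by (rule contr_conj[OF C uU[OF w]])
    have "trace (C ** (U \<omega> ** \<rho>0 ** cadj (U \<omega>))) = trace (C' ** ((\<rho>0 - P) + P))"
      by (simp add: trace_conj C'_def)
    also have "\<dots> = trace (C' ** (\<rho>0 - P)) + trace (C' ** P)"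
      by (simp only: matrix_add_ldistrib trace_add)
    also have "trace (C' ** P) = cinner (U \<omega> *v \<psi>0) (C *v (U \<omega> *v \<psi>0))"
      by (simp add: C'_def P_def trace_CP)
    finally have "Re (trace (C ** (U \<omega> ** \<rho>0 ** cadj (U \<omega>)))) = Re (trace (C' ** (\<rho>0 - P))) + g \<omega>"
      by (simp add: g_def Re_cinner)
    moreover have "Re (trace (C' ** (\<rho>0 - P))) \<le> T0"
      using L1[OF hr0P cC'] by (simp add: T0_def trace_dist_def)
    ultimately show ?thesis by simp
  qed
  have tr_sig: "Re (trace (C ** \<sigma>)) = inner a (C *v a)"
    by (simp add: \<sigma>_def trace_conj P_def trace_CP a_def Re_cinner)
  have "trace_dist \<rho> \<sigma> = Re (trace (C ** \<rho>)) - Re (trace (C ** \<sigma>))"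
    using CX by (simp add: trace_dist_def mmul_diff_right trace_sub)
  also have "Re (trace (C ** \<rho>)) = (\<Sum>\<omega>\<in>\<Omega>. p \<omega> * Re (trace (C ** (U \<omega> ** \<rho>0 ** cadj (U \<omega>)))))"
    by (simp add: \<rho>_def mmul_sum_right mmul_scaleR_right trace_sum trace_scaleR Re_sum)
  also have "\<dots> \<le> (\<Sum>\<omega>\<in>\<Omega>. p \<omega> * (T0 + g \<omega>))"
    using tr_om pnn by (intro sum_mono mult_left_mono) auto
  also have "\<dots> = T0 + (\<Sum>\<omega>\<in>\<Omega>. p \<omega> * g \<omega>)"
    by (simp add: distrib_left sum.distrib psum flip: sum_distrib_right)
  finally have step1: "trace_dist \<rho> \<sigma> \<le> T0 + (\<Sum>\<omega>\<in>\<Omega>. p \<omega> * g \<omega>) - inner a (C *v a)"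
    using tr_sig by simp
  define e where "e = (\<Sum>\<omega>\<in>\<Omega>. p \<omega> *\<^sub>R d \<omega>)"
  have g_exp: "g \<omega> = inner a (C *v a) + inner a (C *v d \<omega>) + inner (d \<omega>) (C *v a) + inner (d \<omega>) (C *v d \<omega>)" for \<omega>
  proof -
    have "U \<omega> *v \<psi>0 = a + d \<omega>" by (simp add: d_def)
    then show ?thesis by (simp add: g_def matrix_vector_right_distrib inner_add_left inner_add_right)
  qed
  have sum_g: "(\<Sum>\<omega>\<in>\<Omega>. p \<omega> * g \<omega>) = inner a (C *v a) + inner a (C *v e) + inner e (C *v a)
      + (\<Sum>\<omega>\<in>\<Omega>. p \<omega> * inner (d \<omega>) (C *v d \<omega>))"
    by (simp add: g_exp distrib_left sum.distrib psum e_def mvec_sum mvec_scaleR inner_sum_right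
        inner_sum_left flip: sum_distrib_right)
  have eE: "e = E *v \<psi>0"
  proof -
    have "e = (\<Sum>\<omega>\<in>\<Omega>. p \<omega> *\<^sub>R (U \<omega> *v \<psi>0)) - (\<Sum>\<omega>\<in>\<Omega>. p \<omega>) *\<^sub>R a"
      by (simp add: e_def d_def scaleR_diff_right sum_subtractf scaleR_sum_left)
    also have "\<dots> = E *v \<psi>0"
      by (simp add: psum E_def a_def matrix_vector_mult_diff_rdistrib mvec_msum mvec_mscaleR)
    finally show ?thesis .
  qed
  have ne: "norm e \<le> op_norm E" using op_bound[of E \<psi>0] npsi by (simp add: eE)
  have b1: "inner a (C *v e) \<le> op_norm E" using inner_C_bound[OF C, of a e] na ne by simp
  have b2: "inner e (C *v a) \<le> op_norm E" using inner_C_bound[OF C, of e a] na ne by simp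
  have b3: "(\<Sum>\<omega>\<in>\<Omega>. p \<omega> * inner (d \<omega>) (C *v d \<omega>)) \<le> (\<Sum>\<omega>\<in>\<Omega>. p \<omega> * (op_norm (U \<omega> - U0))\<^sup>2)"
  proof (rule sum_mono, rule mult_left_mono)
    fix \<omega>
    have dd: "d \<omega> = (U \<omega> - U0) *v \<psi>0" by (simp add: d_def a_def matrix_vector_mult_diff_rdistrib)
    have nd: "norm (d \<omega>) \<le> op_norm (U \<omega> - U0)" using op_bound[of "U \<omega> - U0" \<psi>0] npsi by (simp add: dd)
    have "inner (d \<omega>) (C *v d \<omega>) \<le> norm (d \<omega>) * norm (d \<omega>)" by (rule inner_C_bound[OF C])
    also have "\<dots> \<le> (op_norm (U \<omega> - U0))\<^sup>2"
      using mult_mono[OF nd nd op_norm_nonneg norm_ge_zero] by (simp add: power2_eq_square)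
    finally show "inner (d \<omega>) (C *v d \<omega>) \<le> (op_norm (U \<omega> - U0))\<^sup>2" .
  next
    fix \<omega> assume "\<omega> \<in> \<Omega>" then show "0 \<le> p \<omega>" by (rule pnn)
  qed
  have "trace_dist \<rho> \<sigma> \<le> T0 + 2 * op_norm E + (\<Sum>\<omega>\<in>\<Omega>. p \<omega> * (op_norm (U \<omega> - U0))\<^sup>2)"
    using step1 sum_g b1 b2 b3 by linarith
  then show ?thesis unfolding Let_def by (simp add: \<rho>_def \<sigma>_def P_def T0_def E_def)
qed


end
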